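(* Consider two $K$-tier open access networks as described in the context that are identical (same point processes $\Phi_k$, powers $P_k$, target SIRs $\beta_k$, path loss exponent $\alpha$) except for their channel parameters: the first has parameters $\{\Delta_k\},\{\Psi_k\}$ and the second $\{\Delta'_k\},\{\Psi'_k\}$. If $\Delta_k\ge\Delta'_k$ and $\Psi_k\le\Psi'_k$ for all $k\in\{1,\dots,K\}$, then the coverage probability of the first network is greater than or equal to that of the second.
   Context: Downlink $K$-tier cellular network with tiers indexed by $\mathcal{K}=\{1,\dots,K\}$. For each $k$, tier-$k$ base stations (BSs) are located at the points of a stationary point process $\Phi_k\subset\mathbb{R}^2$ (the $\Phi_k$ need not be independent). Tier-$k$ BSs transmit with per-user power $P_k>0$ and have target SIR $\beta_k>0$; $\alpha$ is the path loss exponent. A typical user is at the origin. Each tier has positive integer channel parameters $\Delta_k$ and $\Psi_k$ (in the multi-antenna interpretation, with $M_k$ antennas and $\Psi_k\le M_k$ users served per resource block, $\Delta_k=M_k-\Psi_k+1$). Each BS at $x\in\Phi_k$ carries two channel-power marks $h_{kx}\sim\Gamma(\Delta_k,1)$ (desired link) and $g_{kx}\sim\Gamma(\Psi_k,1)$ (interfering link), all marks mutually independent and independent of the point processes. The SIR from the BS at $x_k\in\Phi_k$ is $\mathrm{SIR}(x_k)=\dfrac{P_kh_{kx_k}\|x_k\|^{-\alpha}}{\sum_{j\in\mathcal{K}}\sum_{y\in\Phi_j\setminus\{x_k\}}P_jg_{jy}\|y\|^{-\alpha}}$. The open access coverage probability is $\mathtt{P_c}=\mathbb{P}\big(\bigcup_{k\in\mathcal{K}}\{\max_{x_k\in\Phi_k}\mathrm{SIR}(x_k)>\beta_k\}\big)$.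 $\Gamma(a,1)$ denotes the Gamma distribution with shape $a$ and scale $1$. *)

theory Defs
  imports "HOL-Probability.Probability"
begin

text \<open>Points of the plane are vectors in real^2. A point process of tier k is represented
  by an enumeration: its number of points N k w (possibly infinite) and its points
  X k n w for n < N k w.\<close>

definition PPset :: "(nat \<Rightarrow> nat \<Rightarrow> 'a \<Rightarrow> real^2) \<Rightarrow> (nat \<Rightarrow> 'a \<Rightarrow> enat) \<Rightarrow> nat \<Rightarrow> 'a \<Rightarrow> (real^2) set"
  where "PPset X N k w = {X k n w | n. enat n < N k w}"

text \<open>Gamma(a,1) density for a positive integer shape a: this is the Erlang density
  with parameter a - 1 and rate 1, i.e. x^(a-1) e^(-x) / (a-1)! for x >= 0.\<close>

definition gamma_density :: "nat \<Rightarrow> real \<Rightarrow> real"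
  where "gamma_density a = erlang_density (a - 1) 1"

definition interference ::
  "nat \<Rightarrow> (nat \<Rightarrow> real) \<Rightarrow> real \<Rightarrow> (nat \<Rightarrow> nat \<Rightarrow> 'a \<Rightarrow> real^2) \<Rightarrow> (nat \<Rightarrow> 'a \<Rightarrow> enat)
    \<Rightarrow> (nat \<Rightarrow> nat \<Rightarrow> 'a \<Rightarrow> real) \<Rightarrow> 'a \<Rightarrow> real^2 \<Rightarrow> ennreal"
  where "interference K P \<alpha> X N g w x =
    (\<Sum>j\<in>{1..K}. \<Sum>\<^sub>\<infinity> m\<in>{m. enat m < N j w \<and> X j m w \<noteq> x}.
        ennreal (P j * g j m w * norm (X j m w) powr (- \<alpha>)))"

definition SIR ::
  "nat \<Rightarrow> (nat \<Rightarrow> real) \<Rightarrow> real \<Rightarrow> (nat \<Rightarrow> nat \<Rightarrow> 'a \<Rightarrow> real^2) \<Rightarrow> (nat \<Rightarrow> 'a \<Rightarrow> enat)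
    \<Rightarrow> (nat \<Rightarrow> nat \<Rightarrow> 'a \<Rightarrow> real) \<Rightarrow> (nat \<Rightarrow> nat \<Rightarrow> 'a \<Rightarrow> real) \<Rightarrow> nat \<Rightarrow> nat \<Rightarrow> 'a \<Rightarrow> ennreal"
  where "SIR K P \<alpha> X N h g k n w =
    ennreal (P k * h k n w * norm (X k n w) powr (- \<alpha>)) / interference K P \<alpha> X N g w (X k n w)"

text \<open>Open access coverage: for some tier k, the largest SIR over tier-k BSs exceeds beta_k
  (the supremum exceeds beta_k iff some BS has SIR above beta_k).\<close>

definition covered ::
  "nat \<Rightarrow> (nat \<Rightarrow> real) \<Rightarrow> (nat \<Rightarrow> real) \<Rightarrow> real \<Rightarrow> (nat \<Rightarrow> nat \<Rightarrow> 'a \<Rightarrow> real^2) \<Rightarrow> (nat \<Rightarrow> 'a \<Rightarrow> enat)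
    \<Rightarrow> (nat \<Rightarrow> nat \<Rightarrow> 'a \<Rightarrow> real) \<Rightarrow> (nat \<Rightarrow> nat \<Rightarrow> 'a \<Rightarrow> real) \<Rightarrow> 'a \<Rightarrow> bool"
  where "covered K P \<beta> \<alpha> X N h g w \<longleftrightarrow>
    (\<exists>k\<in>{1..K}. (SUP n\<in>{n. enat n < N k w}. SIR K P \<alpha> X N h g k n w) > ennreal (\<beta> k))"

definition coverage_prob ::
  "'a measure \<Rightarrow> nat \<Rightarrow> (nat \<Rightarrow> real) \<Rightarrow> (nat \<Rightarrow> real) \<Rightarrow> real \<Rightarrow> (nat \<Rightarrow> nat \<Rightarrow> 'a \<Rightarrow> real^2)
    \<Rightarrow> (nat \<Rightarrow> 'a \<Rightarrow> enat) \<Rightarrow> (nat \<Rightarrow> nat \<Rightarrow> 'a \<Rightarrow> real) \<Rightarrow> (nat \<Rightarrow> nat \<Rightarrow> 'a \<Rightarrow> real) \<Rightarrow> real"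
  where "coverage_prob M K P \<beta> \<alpha> X N h g =
    measure M {w \<in> space M. covered K P \<beta> \<alpha> X N h g w}"

definition stationary_pp :: "'a measure \<Rightarrow> ('a \<Rightarrow> (real^2) set) \<Rightarrow> bool"
  where "stationary_pp M Phi \<longleftrightarrow>
    (\<forall>(v::real^2) (m::nat) (B::nat \<Rightarrow> (real^2) set) (c::nat \<Rightarrow> nat).
       (\<forall>i<m. B i \<in> sets borel \<and> bounded (B i)) \<longrightarrow>
       measure M {w \<in> space M. \<forall>i<m. card (Phi w \<inter> (\<lambda>y. v + y) ` B i) = c i}
       = measure M {w \<in> space M. \<forall>i<m. card (Phi w \<inter> B i) = c i})"

definition point_process :: "'a measure \<Rightarrow> ('a \<Rightarrow> enat) \<Rightarrow> (nat \<Rightarrow> 'a \<Rightarrow> real^2) \<Rightarrow> bool"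
  where "point_process M N X \<longleftrightarrow>
    N \<in> measurable M (count_space UNIV) \<and> (\<forall>n. X n \<in> borel_measurable M) \<and>
    (AE w in M. inj_on (\<lambda>n. X n w) {n. enat n < N w}) \<and>
    (AE w in M. \<forall>B. bounded B \<longrightarrow> finite ({X n w | n. enat n < N w} \<inter> B))"

definition pp_space :: "nat \<Rightarrow> ((nat \<Rightarrow> nat \<Rightarrow> real^2) \<times> (nat \<Rightarrow> enat)) measure"
  where "pp_space K = (PiM {1..K} (\<lambda>_. PiM UNIV (\<lambda>_. borel))) \<Otimes>\<^sub>M (PiM {1..K} (\<lambda>_. count_space UNIV))"

definition pp_var :: "nat \<Rightarrow> (nat \<Rightarrow> nat \<Rightarrow> 'a \<Rightarrow> real^2) \<Rightarrow> (nat \<Rightarrow> 'a \<Rightarrow> enat) \<Rightarrow> 'a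
    \<Rightarrow> (nat \<Rightarrow> nat \<Rightarrow> real^2) \<times> (nat \<Rightarrow> enat)"
  where "pp_var K X N w = ((\<lambda>k\<in>{1..K}. \<lambda>n. X k n w), (\<lambda>k\<in>{1..K}. N k w))"

text \<open>Mark index set: (True,k,n) is the desired-link mark h, (False,k,n) the interfering-link
  mark g of the n-th BS of tier k.\<close>

definition mark_idx :: "nat \<Rightarrow> (bool \<times> nat \<times> nat) set"
  where "mark_idx K = UNIV \<times> {1..K} \<times> UNIV"

definition mark_var :: "(nat \<Rightarrow> nat \<Rightarrow> 'a \<Rightarrow> real) \<Rightarrow> (nat \<Rightarrow> nat \<Rightarrow> 'a \<Rightarrow> real)
    \<Rightarrow> bool \<times> nat \<times> nat \<Rightarrow> 'a \<Rightarrow> real"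
  where "mark_var h g i w = (case i of (b, k, n) \<Rightarrow> if b then h k n w else g k n w)"

definition gamma_marks ::
  "'a measure \<Rightarrow> nat \<Rightarrow> (nat \<Rightarrow> nat \<Rightarrow> 'a \<Rightarrow> real^2) \<Rightarrow> (nat \<Rightarrow> 'a \<Rightarrow> enat)
    \<Rightarrow> (nat \<Rightarrow> nat) \<Rightarrow> (nat \<Rightarrow> nat) \<Rightarrow> (nat \<Rightarrow> nat \<Rightarrow> 'a \<Rightarrow> real) \<Rightarrow> (nat \<Rightarrow> nat \<Rightarrow> 'a \<Rightarrow> real) \<Rightarrow> bool"
  where "gamma_marks M K X N \<Delta> \<Psi> h g \<longleftrightarrow>
    (\<forall>k\<in>{1..K}. \<forall>n. distributed M lborel (h k n) (\<lambda>x. ennreal (gamma_density (\<Delta> k) x))) \<and>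
    (\<forall>k\<in>{1..K}. \<forall>n. distributed M lborel (g k n) (\<lambda>x. ennreal (gamma_density (\<Psi> k) x))) \<and>
    prob_space.indep_vars M (\<lambda>_. borel) (mark_var h g) (mark_idx K) \<and>
    pp_var K X N \<in> measurable M (pp_space K) \<and>
    prob_space.indep_set M
       (sets (vimage_algebra (space M) (pp_var K X N) (pp_space K)))
       (sets (vimage_algebra (space M) (\<lambda>w. \<lambda>i\<in>mark_idx K. mark_var h g i w)
           (PiM (mark_idx K) (\<lambda>_. borel))))"

end

theory Submission
  imports Defs "HOL-Probability.Probability"
begin


lemma distr_PiM_map:
  assumes M: "\<And>i. i\<in>I \<Longrightarrow> prob_space (M i)"
    and f: "\<And>i. i\<in>I \<Longrightarrow> f i \<in> measurable (M i) (N i)"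
  shows "distr (PiM I M) (PiM I N) (\<lambda>x. \<lambda>i\<in>I. f i (x i)) = PiM I (\<lambda>i. distr (M i) (N i) (f i))"
    (is "?L = ?R")
proof (rule measure_eqI_PiM_infinite[symmetric, where M="\<lambda>i. distr (M i) (N i) (f i)"])
  have sPN: "sets (PiM I N) = sets (PiM I (\<lambda>i. distr (M i) (N i) (f i)))"
    by (rule sets_PiM_cong[OF refl]) (simp only: sets_distr)
  show "sets ?R = sets (PiM I (\<lambda>i. distr (M i) (N i) (f i)))" by (rule refl)
  show "sets ?L = sets (PiM I (\<lambda>i. distr (M i) (N i) (f i)))"
    by (simp only: sets_distr sPN)
  have D: "\<And>i. i \<in> I \<Longrightarrow> prob_space (distr (M i) (N i) (f i))"
    using M f by (simp add: prob_space.prob_space_distr)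
  interpret prob_space ?R using D by (rule prob_space_PiM)
  show "finite_measure ?R" by unfold_locales
  have mf: "(\<lambda>x. \<lambda>i\<in>I. f i (x i)) \<in> measurable (PiM I M) (PiM I N)"
  proof (rule measurable_restrict)
    fix i assume i: "i \<in> I"
    show "(\<lambda>x. f i (x i)) \<in> measurable (PiM I M) (N i)"
      by (rule measurable_compose[OF measurable_component_singleton[OF i, of M] f[OF i]])
  qed
  fix A J assume J: "finite J" "J \<subseteq> I" and A: "\<And>i. i \<in> J \<Longrightarrow> A i \<in> sets (distr (M i) (N i) (f i))"
  have A': "\<And>i. i \<in> J \<Longrightarrow> A i \<in> sets (N i)" using A by (simp only: sets_distr)
  have fJ: "\<And>i. i \<in> J \<Longrightarrow> f i \<in> measurable (M i) (N i)" using f J(2) by blast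
  have "?R (prod_emb I (\<lambda>i. distr (M i) (N i) (f i)) J (Pi\<^sub>E J A)) = (\<Prod>j\<in>J. distr (M j) (N j) (f j) (A j))"
    by (rule emeasure_PiM_emb[OF D J(2,1) A])
  also have "\<dots> = (\<Prod>j\<in>J. M j (f j -` A j \<inter> space (M j)))"
  proof (rule prod.cong[OF refl])
    fix j assume j: "j \<in> J"
    show "distr (M j) (N j) (f j) (A j) = M j (f j -` A j \<inter> space (M j))"
      by (rule emeasure_distr[OF fJ[OF j] A'[OF j]])
  qed
  also have "\<dots> = PiM I M (prod_emb I M J (\<Pi>\<^sub>E j\<in>J. f j -` A j \<inter> space (M j)))"
  proof (rule emeasure_PiM_emb[symmetric, OF M J(2,1)])
    fix j assume j: "j \<in> J"
    show "f j -` A j \<inter> space (M j) \<in> sets (M j)"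
      by (rule measurable_sets[OF fJ[OF j] A'[OF j]])
  qed
  also have "prod_emb I M J (\<Pi>\<^sub>E j\<in>J. f j -` A j \<inter> space (M j)) =
      (\<lambda>x. \<lambda>i\<in>I. f i (x i)) -` prod_emb I (\<lambda>i. distr (M i) (N i) (f i)) J (Pi\<^sub>E J A) \<inter> space (PiM I M)"
  proof (intro set_eqI iffI)
    fix x assume x: "x \<in> prod_emb I M J (\<Pi>\<^sub>E j\<in>J. f j -` A j \<inter> space (M j))"
    then have xs: "x \<in> space (PiM I M)" and xJ: "\<And>j. j \<in> J \<Longrightarrow> f j (x j) \<in> A j"
      by (auto simp: prod_emb_def space_PiM)
    have "(\<lambda>i\<in>I. f i (x i)) \<in> space (PiM I N)" by (rule measurable_space[OF mf xs])
    then show "x \<in> (\<lambda>x. \<lambda>i\<in>I. f i (x i)) -` prod_emb I (\<lambda>i. distr (M i) (N i) (f i)) J (Pi\<^sub>E J A) \<inter> space (PiM I M)"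
      using xs xJ J(2) by (auto simp: prod_emb_def space_PiM)
  next
    fix x assume x: "x \<in> (\<lambda>x. \<lambda>i\<in>I. f i (x i)) -` prod_emb I (\<lambda>i. distr (M i) (N i) (f i)) J (Pi\<^sub>E J A) \<inter> space (PiM I M)"
    then have xs: "x \<in> space (PiM I M)" by (auto simp: prod_emb_def)
    have xJ: "f j (x j) \<in> A j" if j: "j \<in> J" for j
    proof -
      from x have "restrict (\<lambda>i\<in>I. f i (x i)) J \<in> Pi\<^sub>E J A" by (simp add: prod_emb_def)
      from PiE_mem[OF this j] show ?thesis using j J(2) by auto
    qed
    show "x \<in> prod_emb I M J (\<Pi>\<^sub>E j\<in>J. f j -` A j \<inter> space (M j))"
      using xs xJ J(2) by (auto simp: prod_emb_def space_PiM)
  qed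
  also have "PiM I M \<dots> = ?L (prod_emb I (\<lambda>i. distr (M i) (N i) (f i)) J (Pi\<^sub>E J A))"
  proof (rule emeasure_distr[symmetric, OF mf])
    have "prod_emb I (\<lambda>i. distr (M i) (N i) (f i)) J (Pi\<^sub>E J A) \<in> sets (PiM I (\<lambda>i. distr (M i) (N i) (f i)))"
      using J A by (intro sets_PiM_I) auto
    then show "prod_emb I (\<lambda>i. distr (M i) (N i) (f i)) J (Pi\<^sub>E J A) \<in> sets (PiM I N)"
      by (simp only: sPN)
  qed
  finally show "?R (prod_emb I (\<lambda>i. distr (M i) (N i) (f i)) J (Pi\<^sub>E J A)) = ?L (prod_emb I (\<lambda>i. distr (M i) (N i) (f i)) J (Pi\<^sub>E J A))" .
qed



lemma covered_cong:
  assumes "\<And>k n. k \<in> {1..K} \<Longrightarrow> X k n w = X' k n w'"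
    and "\<And>k. k \<in> {1..K} \<Longrightarrow> N k w = N' k w'"
    and "\<And>k n. k \<in> {1..K} \<Longrightarrow> h k n w = h' k n w'"
    and "\<And>k n. k \<in> {1..K} \<Longrightarrow> g k n w = g' k n w'"
  shows "covered K P \<beta> \<alpha> X N h g w = covered K P \<beta> \<alpha> X' N' h' g' w'"
proof -
  have I: "\<And>k n. k \<in> {1..K} \<Longrightarrow> interference K P \<alpha> X N g w (X k n w) = interference K P \<alpha> X' N' g' w' (X' k n w')"
    unfolding interference_def using assms by (intro sum.cong refl arg_cong2[where f=infsum] ext) auto
  show ?thesis unfolding covered_def SIR_def
    using assms I by (intro bex_cong refl arg_cong2[where f="(<)"] SUP_cong) auto
qed

lemma ennreal_inverse_anti: "(b::ennreal) \<le> c \<Longrightarrow> inverse c \<le> inverse b"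
proof (cases "b = 0")
  case False
  assume bc: "b \<le> c"
  show ?thesis
  proof (cases "c = top")
    case False
    then obtain c' where c: "c = ennreal c'" "c' \<ge> 0" by (cases c) auto
    with bc False obtain b' where b: "b = ennreal b'" "b' \<ge> 0"
      by (cases b) (auto simp: top_unique)
    have "b' > 0" using b \<open>b \<noteq> 0\<close> by auto
    then have "c' > 0" using b c bc by (auto simp: ennreal_le_iff)
    then show ?thesis using b c bc \<open>b' > 0\<close>
      by (simp add: inverse_ennreal ennreal_le_iff le_imp_inverse_le)
  qed simp
qed simp

lemma ennreal_div_anti: "(b::ennreal) \<le> c \<Longrightarrow> a / c \<le> a / b"
  unfolding divide_ennreal_def by (intro mult_left_mono ennreal_inverse_anti) auto

lemma covered_mono:
  assumes "covered K P \<beta> \<alpha> X N h g w"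
    and P: "\<And>k. k \<in> {1..K} \<Longrightarrow> P k > 0"
    and hh: "\<And>k n. k \<in> {1..K} \<Longrightarrow> h k n w \<le> h' k n w"
    and gg: "\<And>k n. k \<in> {1..K} \<Longrightarrow> g' k n w \<le> g k n w"
  shows "covered K P \<beta> \<alpha> X N h' g' w"
proof -
  have I: "interference K P \<alpha> X N g' w x \<le> interference K P \<alpha> X N g w x" for x
    unfolding interference_def
  proof (intro sum_mono infsum_mono)
    fix j m assume j: "j \<in> {1..K}"
    show "ennreal (P j * g' j m w * norm (X j m w) powr - \<alpha>) \<le> ennreal (P j * g j m w * norm (X j m w) powr - \<alpha>)"
      using P[OF j] gg[OF j, of m] by (intro ennreal_leI mult_right_mono mult_left_mono) auto
  qed (simp_all add: nonneg_summable_on_complete)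
  have S: "SIR K P \<alpha> X N h g k n w \<le> SIR K P \<alpha> X N h' g' k n w" if k: "k \<in> {1..K}" for k n
  proof -
    have "SIR K P \<alpha> X N h g k n w \<le> ennreal (P k * h' k n w * norm (X k n w) powr - \<alpha>) / interference K P \<alpha> X N g w (X k n w)"
      unfolding SIR_def using P[OF k] hh[OF k, of n]
      by (intro divide_right_mono_ennreal ennreal_leI mult_right_mono mult_left_mono) auto
    also have "\<dots> \<le> SIR K P \<alpha> X N h' g' k n w"
      unfolding SIR_def by (rule ennreal_div_anti[OF I])
    finally show ?thesis .
  qed
  from assms(1) obtain k where k: "k \<in> {1..K}" and
    c: "(SUP n\<in>{n. enat n < N k w}. SIR K P \<alpha> X N h g k n w) > ennreal (\<beta> k)"
    unfolding covered_def by blast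
  have "(SUP n\<in>{n. enat n < N k w}. SIR K P \<alpha> X N h g k n w) \<le> (SUP n\<in>{n. enat n < N k w}. SIR K P \<alpha> X N h' g' k n w)"
    using S[OF k] by (intro SUP_mono) auto
  with c k show ?thesis unfolding covered_def by (auto intro: less_le_trans)
qed



definition cov :: "nat \<Rightarrow> (nat \<Rightarrow> real) \<Rightarrow> (nat \<Rightarrow> real) \<Rightarrow> real \<Rightarrow>
   ((nat \<Rightarrow> nat \<Rightarrow> real^2) \<times> (nat \<Rightarrow> enat)) \<times> (bool \<times> nat \<times> nat \<Rightarrow> real) \<Rightarrow> bool" where
 "cov K P \<beta> \<alpha> z = covered K P \<beta> \<alpha> (\<lambda>k n (_::unit). fst (fst z) k n) (\<lambda>k _. snd (fst z) k)
     (\<lambda>k n _. snd z (True,k,n)) (\<lambda>k n _. snd z (False,k,n)) ()"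

definition WS :: "nat \<Rightarrow> (((nat \<Rightarrow> nat \<Rightarrow> real^2) \<times> (nat \<Rightarrow> enat)) \<times> (bool \<times> nat \<times> nat \<Rightarrow> real)) measure" where
  "WS K = pp_space K \<Otimes>\<^sub>M PiM (mark_idx K) (\<lambda>_. borel)"

lemma infsum_nat_ennreal: "infsum (f::nat\<Rightarrow>ennreal) A = suminf (\<lambda>m. if m\<in>A then f m else 0)"
proof -
  have "infsum f A = infsum (\<lambda>m. if m\<in>A then f m else 0) UNIV"
    by (intro infsum_cong_neutral) auto
  also have "\<dots> = suminf (\<lambda>m. if m\<in>A then f m else 0)"
    by (rule sums_unique[OF has_sum_imp_sums[OF has_sum_infsum]]) (simp add: nonneg_summable_on_complete)
  finally show ?thesis .
qed

lemma SUP_ennreal_restrict: "(SUP n\<in>{n. Q n}. f n :: ennreal) = (SUP n. if Q n then f n else 0)"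
proof (rule antisym)
  show "(SUP n\<in>{n. Q n}. f n) \<le> (SUP n. if Q n then f n else 0)"
  proof (rule SUP_least)
    fix x assume "x \<in> {n. Q n}"
    then show "f x \<le> (SUP n. if Q n then f n else 0)"
      using SUP_upper[of x UNIV "\<lambda>n. if Q n then f n else 0"] by simp
  qed
  show "(SUP n. if Q n then f n else 0) \<le> (SUP n\<in>{n. Q n}. f n)"
    by (rule SUP_least) (auto intro: SUP_upper)
qed

lemma WS_fst: assumes k: "k \<in> {1..K}" shows "(\<lambda>z. fst (fst z) k n) \<in> borel_measurable (WS K)"
proof -
  have "(\<lambda>z. fst (fst z)) \<in> measurable (WS K) (PiM {1..K} (\<lambda>_. PiM UNIV (\<lambda>_. borel)))"
    unfolding WS_def pp_space_def by measurable
  from measurable_compose[OF this measurable_component_singleton[OF k]]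
  have "(\<lambda>z. fst (fst z) k) \<in> measurable (WS K) (PiM UNIV (\<lambda>_. borel))" .
  from measurable_compose[OF this measurable_component_singleton[of n UNIV]]
  show ?thesis by simp
qed

lemma WS_snd: "k \<in> {1..K} \<Longrightarrow> (\<lambda>z. snd (fst z) k) \<in> measurable (WS K) (count_space UNIV)"
  unfolding WS_def pp_space_def by measurable

lemma WS_mark: "k \<in> {1..K} \<Longrightarrow> (\<lambda>z. snd z (b,k,n)) \<in> borel_measurable (WS K)"
  unfolding WS_def mark_idx_def by measurable

lemma WS_lt: "k \<in> {1..K} \<Longrightarrow> Measurable.pred (WS K) (\<lambda>z. enat m < snd (fst z) k)"
  by (rule measurable_compose[OF WS_snd measurable_count_space])

lemma cov_alt: "cov K P \<beta> \<alpha> z \<longleftrightarrow> (\<exists>k\<in>{1..K}. ennreal (\<beta> k) <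
   (SUP n. if enat n < snd (fst z) k then
      ennreal (P k * snd z (True,k,n) * norm (fst (fst z) k n) powr - \<alpha>) /
      (\<Sum>j\<in>{1..K}. suminf (\<lambda>m. if enat m < snd (fst z) j \<and> fst (fst z) j m \<noteq> fst (fst z) k n
          then ennreal (P j * snd z (False,j,m) * norm (fst (fst z) j m) powr - \<alpha>) else 0))
    else 0))"
  unfolding cov_def covered_def SIR_def interference_def
  by (simp add: SUP_ennreal_restrict infsum_nat_ennreal)

lemma cov_meas: "{z \<in> space (WS K). cov K P \<beta> \<alpha> z} \<in> sets (WS K)"
proof -
  have SIRm: "(\<lambda>z. if enat n < snd (fst z) k then
      ennreal (P k * snd z (True,k,n) * norm (fst (fst z) k n) powr - \<alpha>) /
      (\<Sum>j\<in>{1..K}. suminf (\<lambda>m. if enat m < snd (fst z) j \<and> fst (fst z) j m \<noteq> fst (fst z) k n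
          then ennreal (P j * snd z (False,j,m) * norm (fst (fst z) j m) powr - \<alpha>) else 0))
    else 0) \<in> borel_measurable (WS K)" if k: "k \<in> {1..K}" for k n
  proof -
    note [measurable] = WS_fst[OF k] WS_mark[OF k] WS_lt[OF k]
    have Im: "(\<lambda>z. \<Sum>j\<in>{1..K}. suminf (\<lambda>m. if enat m < snd (fst z) j \<and> fst (fst z) j m \<noteq> fst (fst z) k n
          then ennreal (P j * snd z (False,j,m) * norm (fst (fst z) j m) powr - \<alpha>) else 0)) \<in> borel_measurable (WS K)"
    proof (rule borel_measurable_sum)
      fix j assume j: "j \<in> {1..K}"
      note [measurable] = WS_fst[OF j] WS_mark[OF j] WS_lt[OF j]
      show "(\<lambda>z. suminf (\<lambda>m. if enat m < snd (fst z) j \<and> fst (fst z) j m \<noteq> fst (fst z) k n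
          then ennreal (P j * snd z (False,j,m) * norm (fst (fst z) j m) powr - \<alpha>) else 0)) \<in> borel_measurable (WS K)"
        by measurable
    qed
    show ?thesis using Im by measurable
  qed
  have "Measurable.pred (WS K) (cov K P \<beta> \<alpha>)"
    unfolding cov_alt[abs_def]
  proof (rule pred_intros_finite(4))
    fix k assume k: "k \<in> {1..K}"
    have Sm: "(\<lambda>z. SUP n. if enat n < snd (fst z) k then
      ennreal (P k * snd z (True,k,n) * norm (fst (fst z) k n) powr - \<alpha>) /
      (\<Sum>j\<in>{1..K}. suminf (\<lambda>m. if enat m < snd (fst z) j \<and> fst (fst z) j m \<noteq> fst (fst z) k n
          then ennreal (P j * snd z (False,j,m) * norm (fst (fst z) j m) powr - \<alpha>) else 0))
    else 0) \<in> borel_measurable (WS K)"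
      by (rule borel_measurable_SUP) (simp_all add: SIRm[OF k])
    show "Measurable.pred (WS K) (\<lambda>z. ennreal (\<beta> k) <
   (SUP n. if enat n < snd (fst z) k then
      ennreal (P k * snd z (True,k,n) * norm (fst (fst z) k n) powr - \<alpha>) /
      (\<Sum>j\<in>{1..K}. suminf (\<lambda>m. if enat m < snd (fst z) j \<and> fst (fst z) j m \<noteq> fst (fst z) k n
          then ennreal (P j * snd z (False,j,m) * norm (fst (fst z) j m) powr - \<alpha>) else 0))
    else 0))"
      unfolding pred_def by (rule borel_measurable_less[OF measurable_const Sm]) simp
  qed simp
  then show ?thesis by simp
qed



definition qf :: "real measure \<Rightarrow> real \<Rightarrow> real" where
  "qf \<mu> \<omega> = Inf {x. \<omega> \<le> cdf \<mu> x}"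

abbreviation "\<Omega>0 \<equiv> restrict_space lborel {0<..<1::real}"

lemma prob_space_\<Omega>0: "prob_space \<Omega>0"
  by (auto simp add: emeasure_restrict_space space_restrict_space intro!: prob_spaceI)

lemma qf_distr: "real_distribution \<mu> \<Longrightarrow> distr \<Omega>0 borel (qf \<mu>) = \<mu>"
  unfolding qf_def by (rule cdf_distribution.distr_I_eq_M) (simp add: cdf_distribution_def)

lemma qf_meas: assumes "real_distribution \<mu>" shows "qf \<mu> \<in> measurable \<Omega>0 borel"
proof -
  have "qf \<mu> \<in> borel_measurable (restrict_space borel {0<..<1})"
    unfolding qf_def using assms
    by (rule cdf_distribution.measurable_CI[unfolded cdf_distribution_def])
  moreover have "measurable \<Omega>0 borel = measurable (restrict_space borel {0<..<1::real}) (borel::real measure)"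
    by (rule measurable_cong_sets) (simp_all add: sets_restrict_space_cong[OF sets_lborel])
  ultimately show ?thesis by simp
qed

lemma qf_mono:
  assumes \<mu>: "real_distribution \<mu>" and \<nu>: "real_distribution \<nu>"
    and le: "\<And>x. cdf \<mu> x \<le> cdf \<nu> x" and \<omega>: "\<omega> \<in> {0<..<1}"
  shows "qf \<nu> \<omega> \<le> qf \<mu> \<omega>"
proof -
  interpret m: cdf_distribution \<mu> using \<mu> by (simp add: cdf_distribution_def)
  interpret n: cdf_distribution \<nu> using \<nu> by (simp add: cdf_distribution_def)
  have "\<omega> \<le> cdf \<mu> (qf \<mu> \<omega>)"
    using m.pseudoinverse[of \<omega> "qf \<mu> \<omega>"] \<omega> unfolding qf_def by auto
  also have "\<dots> \<le> cdf \<nu> (qf \<mu> \<omega>)" by (rule le)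
  finally show ?thesis
    using n.pseudoinverse[of \<omega> "qf \<mu> \<omega>"] \<omega> unfolding qf_def by auto
qed

definition GL :: "nat \<Rightarrow> real measure" where
  "GL a = density lborel (\<lambda>x. ennreal (gamma_density a x))"

lemma GL_rd: "real_distribution (GL a)"
proof -
  have "prob_space (GL a)"
    unfolding GL_def gamma_density_def by (rule prob_space_erlang_density) simp
  then show ?thesis unfolding real_distribution_def real_distribution_axioms_def GL_def by simp
qed

lemma GL_cdf: "cdf (GL a) x = erlang_CDF (a - 1) 1 x"
proof -
  have "emeasure (GL a) {..x} = erlang_CDF (a - 1) 1 x"
    unfolding GL_def gamma_density_def by (rule emeasure_erlang_density) simp
  then show ?thesis
    unfolding cdf_def measure_def by simp
qed

lemma erlang_CDF_anti: "k \<le> k' \<Longrightarrow> erlang_CDF k' 1 x \<le> erlang_CDF k 1 x"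
  unfolding erlang_CDF_def by (auto intro!: sum_mono2)

lemma qf_GL_mono: "a' \<le> a \<Longrightarrow> \<omega> \<in> {0<..<1} \<Longrightarrow> qf (GL a') \<omega> \<le> qf (GL a) \<omega>"
  by (rule qf_mono[OF GL_rd GL_rd]) (auto simp: GL_cdf intro: erlang_CDF_anti)



definition par :: "(nat\<Rightarrow>nat) \<Rightarrow> (nat\<Rightarrow>nat) \<Rightarrow> bool\<times>nat\<times>nat \<Rightarrow> nat" where
  "par \<Delta> \<Psi> i = (case i of (b,k,n) \<Rightarrow> if b then \<Delta> k else \<Psi> k)"

definition Qf :: "nat \<Rightarrow> (nat\<Rightarrow>nat) \<Rightarrow> (nat\<Rightarrow>nat) \<Rightarrow> (bool\<times>nat\<times>nat \<Rightarrow> real) \<Rightarrow> (bool\<times>nat\<times>nat \<Rightarrow> real)" where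
  "Qf K \<Delta> \<Psi> u = (\<lambda>i\<in>mark_idx K. qf (GL (par \<Delta> \<Psi> i)) (u i))"

abbreviation UU :: "nat \<Rightarrow> (bool\<times>nat\<times>nat \<Rightarrow> real) measure" where
  "UU K \<equiv> PiM (mark_idx K) (\<lambda>_. \<Omega>0)"

lemma prob_space_UU: "prob_space (UU K)"
  by (intro prob_space_PiM prob_space_\<Omega>0)

lemma Qf_meas: "Qf K \<Delta> \<Psi> \<in> measurable (UU K) (PiM (mark_idx K) (\<lambda>_. borel))"
  unfolding Qf_def
proof (intro measurable_restrict)
  fix i assume "i \<in> mark_idx K"
  then have "(\<lambda>u. u i) \<in> measurable (UU K) \<Omega>0"
    using measurable_component_singleton[of i "mark_idx K" "\<lambda>_. \<Omega>0"] by simp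
  then show "(\<lambda>u. qf (GL (par \<Delta> \<Psi> i)) (u i)) \<in> measurable (UU K) borel"
    by (rule measurable_compose) (rule qf_meas[OF GL_rd])
qed

lemma law_marks: "distr (UU K) (PiM (mark_idx K) (\<lambda>_. borel)) (Qf K \<Delta> \<Psi>) = PiM (mark_idx K) (\<lambda>i. GL (par \<Delta> \<Psi> i))"
  unfolding Qf_def
proof -
  have "distr (UU K) (PiM (mark_idx K) (\<lambda>_. borel)) (\<lambda>x. \<lambda>i\<in>mark_idx K. qf (GL (par \<Delta> \<Psi> i)) (x i))
      = PiM (mark_idx K) (\<lambda>i. distr \<Omega>0 borel (qf (GL (par \<Delta> \<Psi> i))))"
    by (rule distr_PiM_map[OF prob_space_\<Omega>0 qf_meas[OF GL_rd]])
  also have "\<dots> = PiM (mark_idx K) (\<lambda>i. GL (par \<Delta> \<Psi> i))"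
    by (rule PiM_cong[OF refl qf_distr[OF GL_rd]])
  finally show "distr (UU K) (PiM (mark_idx K) (\<lambda>_. borel)) (\<lambda>x. \<lambda>i\<in>mark_idx K. qf (GL (par \<Delta> \<Psi> i)) (x i))
      = PiM (mark_idx K) (\<lambda>i. GL (par \<Delta> \<Psi> i))" .
qed

lemma mv_T: "mark_var h g (True,k,n) = h k n" by (rule ext) (simp add: mark_var_def)
lemma mv_F: "mark_var h g (False,k,n) = g k n" by (rule ext) (simp add: mark_var_def)

lemma distr_borel_lborel: "distr M borel f = distr M lborel f"
  unfolding distr_def by (simp only: space_lborel sets_lborel)

lemma rep:
  assumes M: "prob_space M" and K: "K > 0" and gm: "gamma_marks M K X N \<Delta> \<Psi> h g"
  shows "emeasure M {w\<in>space M. covered K P \<beta> \<alpha> X N h g w} =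
    (\<integral>\<^sup>+ p. emeasure (UU K) {u\<in>space (UU K). cov K P \<beta> \<alpha> (p, Qf K \<Delta> \<Psi> u)} \<partial>(distr M (pp_space K) (pp_var K X N)))"
proof -
  interpret prob_space M by fact
  let ?I = "mark_idx K"
  let ?B = "PiM ?I (\<lambda>_. borel::real measure)"
  define Y where "Y w = (\<lambda>i\<in>?I. mark_var h g i w)" for w
  define Zp where "Zp = pp_var K X N"
  from gm have hd: "\<forall>k\<in>{1..K}. \<forall>n. distributed M lborel (h k n) (\<lambda>x. ennreal (gamma_density (\<Delta> k) x))"
    and gd: "\<forall>k\<in>{1..K}. \<forall>n. distributed M lborel (g k n) (\<lambda>x. ennreal (gamma_density (\<Psi> k) x))"
    and ind: "indep_vars (\<lambda>_. borel) (mark_var h g) ?I"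
    and Zm: "Zp \<in> measurable M (pp_space K)"
    and iset: "indep_set (sets (vimage_algebra (space M) Zp (pp_space K))) (sets (vimage_algebra (space M) Y ?B))"
    unfolding gamma_marks_def Zp_def Y_def by auto
  have rvlaw: "random_variable borel (mark_var h g i) \<and> distr M borel (mark_var h g i) = GL (par \<Delta> \<Psi> i)"
    if i: "i \<in> ?I" for i
  proof -
    obtain b k n where bkn: "i = (b,k,n)" and k: "k \<in> {1..K}" using i by (auto simp: mark_idx_def)
    show ?thesis
    proof (cases b)
      case True
      with hd k have "distributed M lborel (h k n) (\<lambda>x. ennreal (gamma_density (\<Delta> k) x))" by auto
      then show ?thesis using True bkn
        by (simp add: distributed_def mv_T mv_F par_def GL_def distr_borel_lborel)
    next
      case False
      with gd k have "distributed M lborel (g k n) (\<lambda>x. ennreal (gamma_density (\<Psi> k) x))" by auto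
      then show ?thesis using False bkn
        by (simp add: distributed_def mv_T mv_F par_def GL_def distr_borel_lborel)
    qed
  qed
  have Ine: "?I \<noteq> {}" using K by (auto simp: mark_idx_def)
  have A: "distr M ?B Y = PiM ?I (\<lambda>i. GL (par \<Delta> \<Psi> i))"
  proof -
    have "distr M ?B (\<lambda>x. \<lambda>i\<in>?I. mark_var h g i x) = PiM ?I (\<lambda>i. distr M borel (mark_var h g i))"
      using indep_vars_iff_distr_eq_PiM'[OF Ine, where M'="\<lambda>_. borel" and X="mark_var h g"] rvlaw ind by auto
    also have "\<dots> = PiM ?I (\<lambda>i. GL (par \<Delta> \<Psi> i))"
      using rvlaw by (intro PiM_cong) auto
    finally show ?thesis unfolding Y_def by simp
  qed
  have Ym: "Y \<in> measurable M ?B" unfolding Y_def using rvlaw by (intro measurable_restrict) auto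
  have ZYm: "(\<lambda>w. (Zp w, Y w)) \<in> measurable M (WS K)"
    unfolding WS_def using Zm Ym by (rule measurable_Pair)
  have B: "distr M (pp_space K) Zp \<Otimes>\<^sub>M distr M ?B Y = distr M (WS K) (\<lambda>w. (Zp w, Y w))"
  proof (rule pair_measure_eqI)
    show "sigma_finite_measure (distr M (pp_space K) Zp)"
      by (rule prob_space_imp_sigma_finite[OF prob_space_distr[OF Zm]])
    show "sigma_finite_measure (distr M ?B Y)"
      by (rule prob_space_imp_sigma_finite[OF prob_space_distr[OF Ym]])
    show "sets (distr M (pp_space K) Zp \<Otimes>\<^sub>M distr M ?B Y) = sets (distr M (WS K) (\<lambda>w. (Zp w, Y w)))"
      unfolding WS_def by simp
    fix A Bs assume A: "A \<in> sets (distr M (pp_space K) Zp)" and Bs: "Bs \<in> sets (distr M ?B Y)"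
    then have A': "A \<in> sets (pp_space K)" and B': "Bs \<in> sets ?B" by simp_all
    let ?a = "Zp -` A \<inter> space M" and ?b = "Y -` Bs \<inter> space M"
    have a: "?a \<in> sets (vimage_algebra (space M) Zp (pp_space K))" by (rule in_vimage_algebra[OF A'])
    have b: "?b \<in> sets (vimage_algebra (space M) Y ?B)" by (rule in_vimage_algebra[OF B'])
    have ab: "prob (?a \<inter> ?b) = prob ?a * prob ?b" by (rule indep_setD[OF iset a b])
    have AB: "A \<times> Bs \<in> sets (WS K)" unfolding WS_def using A' B' by (rule pair_measureI)
    have "(\<lambda>w. (Zp w, Y w)) -` (A \<times> Bs) \<inter> space M = ?a \<inter> ?b" by auto
    then have "emeasure (distr M (WS K) (\<lambda>w. (Zp w, Y w))) (A \<times> Bs) = prob (?a \<inter> ?b)"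
      using AB ZYm by (simp add: emeasure_distr emeasure_eq_measure)
    moreover have "emeasure (distr M (pp_space K) Zp) A = prob ?a"
      using A' Zm by (simp add: emeasure_distr emeasure_eq_measure)
    moreover have "emeasure (distr M ?B Y) Bs = prob ?b"
      using B' Ym by (simp add: emeasure_distr emeasure_eq_measure)
    ultimately show "emeasure (distr M (pp_space K) Zp) A * emeasure (distr M ?B Y) Bs =
        emeasure (distr M (WS K) (\<lambda>w. (Zp w, Y w))) (A \<times> Bs)"
      using ab by (simp add: ennreal_mult)
  qed
  let ?\<mu> = "distr M (pp_space K) Zp"
  let ?D = "distr (UU K) ?B (Qf K \<Delta> \<Psi>)"
  let ?C = "{z \<in> space (WS K). cov K P \<beta> \<alpha> z}"
  have C: "distr M ?B Y = ?D" by (simp add: A law_marks)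
  have cov_eq: "covered K P \<beta> \<alpha> X N h g w = cov K P \<beta> \<alpha> (Zp w, Y w)" for w
    unfolding cov_def Zp_def Y_def pp_var_def
    by (rule covered_cong) (auto simp: mark_var_def mark_idx_def)
  have "{w\<in>space M. covered K P \<beta> \<alpha> X N h g w} = (\<lambda>w. (Zp w, Y w)) -` ?C \<inter> space M"
    using measurable_space[OF ZYm] by (auto simp: cov_eq)
  then have "emeasure M {w\<in>space M. covered K P \<beta> \<alpha> X N h g w} = emeasure (distr M (WS K) (\<lambda>w. (Zp w, Y w))) ?C"
    using ZYm cov_meas by (simp add: emeasure_distr)
  also have "\<dots> = emeasure (?\<mu> \<Otimes>\<^sub>M ?D) ?C" using B C by simp
  also have "\<dots> = (\<integral>\<^sup>+p. emeasure ?D (Pair p -` ?C) \<partial>?\<mu>)"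
  proof -
    interpret D: prob_space ?D
      by (rule prob_space.prob_space_distr[OF prob_space_UU Qf_meas])
    have "sets (?\<mu> \<Otimes>\<^sub>M ?D) = sets (WS K)" unfolding WS_def
      by (intro sets_pair_measure_cong) simp_all
    then show ?thesis using cov_meas by (intro D.emeasure_pair_measure_alt) simp
  qed
  also have "\<dots> = (\<integral>\<^sup>+ p. emeasure (UU K) {u\<in>space (UU K). cov K P \<beta> \<alpha> (p, Qf K \<Delta> \<Psi> u)} \<partial>?\<mu>)"
  proof (rule nn_integral_cong)
    fix p assume p: "p \<in> space ?\<mu>"
    have Cs: "?C \<in> sets (pp_space K \<Otimes>\<^sub>M ?B)" using cov_meas unfolding WS_def .
    have "emeasure ?D (Pair p -` ?C) = emeasure (UU K) (Qf K \<Delta> \<Psi> -` (Pair p -` ?C) \<inter> space (UU K))"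
      using sets_Pair1[OF Cs] by (intro emeasure_distr Qf_meas) simp
    also have "Qf K \<Delta> \<Psi> -` (Pair p -` ?C) \<inter> space (UU K) = {u\<in>space (UU K). cov K P \<beta> \<alpha> (p, Qf K \<Delta> \<Psi> u)}"
      using measurable_space[OF Qf_meas] p by (auto simp: WS_def space_pair_measure)
    finally show "emeasure ?D (Pair p -` ?C) = emeasure (UU K) {u\<in>space (UU K). cov K P \<beta> \<alpha> (p, Qf K \<Delta> \<Psi> u)}" .
  qed
  finally show ?thesis unfolding Zp_def .
qed



theorem theorem1:
  fixes M :: "'a measure"
    and K :: nat
    and X :: "nat \<Rightarrow> nat \<Rightarrow> 'a \<Rightarrow> real^2"
    and N :: "nat \<Rightarrow> 'a \<Rightarrow> enat"
    and P \<beta> :: "nat \<Rightarrow> real"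
    and \<alpha> :: real
    and \<Delta> \<Psi> \<Delta>' \<Psi>' :: "nat \<Rightarrow> nat"
    and h g h' g' :: "nat \<Rightarrow> nat \<Rightarrow> 'a \<Rightarrow> real"
  assumes "prob_space M"
    and "\<forall>k\<in>{1..K}. point_process M (N k) (X k)"
    and "\<forall>k\<in>{1..K}. stationary_pp M (PPset X N k)"
    and "\<forall>k\<in>{1..K}. P k > 0 \<and> \<beta> k > 0"
    and "\<forall>k\<in>{1..K}. \<Delta> k \<ge> 1 \<and> \<Psi> k \<ge> 1 \<and> \<Delta>' k \<ge> 1 \<and> \<Psi>' k \<ge> 1"
    and "gamma_marks M K X N \<Delta> \<Psi> h g"
    and "gamma_marks M K X N \<Delta>' \<Psi>' h' g'"
    and "\<forall>k\<in>{1..K}. \<Delta> k \<ge> \<Delta>' k \<and> \<Psi> k \<le> \<Psi>' k"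
  shows "coverage_prob M K P \<beta> \<alpha> X N h g \<ge> coverage_prob M K P \<beta> \<alpha> X N h' g'"
proof -
  interpret prob_space M by fact
  show ?thesis
  proof (cases "K = 0")
    case True
    then show ?thesis by (simp add: coverage_prob_def covered_def)
  next
    case False
    then have K: "K > 0" by simp
    let ?\<mu> = "distr M (pp_space K) (pp_var K X N)"
    note E1 = rep[OF assms(1) K assms(6), of P \<beta> \<alpha>]
    note E2 = rep[OF assms(1) K assms(7), of P \<beta> \<alpha>]
    have le: "(\<integral>\<^sup>+p. emeasure (UU K) {u\<in>space (UU K). cov K P \<beta> \<alpha> (p, Qf K \<Delta>' \<Psi>' u)} \<partial>?\<mu>)
       \<le> (\<integral>\<^sup>+p. emeasure (UU K) {u\<in>space (UU K). cov K P \<beta> \<alpha> (p, Qf K \<Delta> \<Psi> u)} \<partial>?\<mu>)"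
    proof (rule nn_integral_mono)
      fix p assume p: "p \<in> space ?\<mu>"
      have pm: "(\<lambda>u. (p, Qf K \<Delta> \<Psi> u)) \<in> measurable (UU K) (WS K)"
        unfolding WS_def using p by (intro measurable_Pair measurable_const Qf_meas) simp
      have "{u\<in>space (UU K). cov K P \<beta> \<alpha> (p, Qf K \<Delta> \<Psi> u)} =
          (\<lambda>u. (p, Qf K \<Delta> \<Psi> u)) -` {z\<in>space (WS K). cov K P \<beta> \<alpha> z} \<inter> space (UU K)"
        using measurable_space[OF pm] by auto
      then have meas: "{u\<in>space (UU K). cov K P \<beta> \<alpha> (p, Qf K \<Delta> \<Psi> u)} \<in> sets (UU K)"
        using measurable_sets[OF pm cov_meas] by simp
      show "emeasure (UU K) {u\<in>space (UU K). cov K P \<beta> \<alpha> (p, Qf K \<Delta>' \<Psi>' u)}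
          \<le> emeasure (UU K) {u\<in>space (UU K). cov K P \<beta> \<alpha> (p, Qf K \<Delta> \<Psi> u)}"
      proof (rule emeasure_mono[OF _ meas])
        show "{u\<in>space (UU K). cov K P \<beta> \<alpha> (p, Qf K \<Delta>' \<Psi>' u)} \<subseteq> {u\<in>space (UU K). cov K P \<beta> \<alpha> (p, Qf K \<Delta> \<Psi> u)}"
        proof safe
          fix u assume u: "u \<in> space (UU K)" and c: "cov K P \<beta> \<alpha> (p, Qf K \<Delta>' \<Psi>' u)"
          have uI: "u i \<in> {0<..<1}" if "i \<in> mark_idx K" for i
            using u that by (auto simp: space_PiM space_restrict_space)
          have mI: "(b, k, n) \<in> mark_idx K" if "k \<in> {1..K}" for b k n
            using that by (simp add: mark_idx_def)
          show "cov K P \<beta> \<alpha> (p, Qf K \<Delta> \<Psi> u)"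
            using c unfolding cov_def fst_conv snd_conv
          proof (rule covered_mono)
            fix k assume k: "k \<in> {1..K}"
            then show "0 < P k" using assms(4) by auto
          next
            fix k n assume k: "k \<in> {1..K}"
            have "qf (GL (\<Delta>' k)) (u (True, k, n)) \<le> qf (GL (\<Delta> k)) (u (True, k, n))"
              using assms(8) k uI[OF mI[OF k]] by (intro qf_GL_mono) auto
            then show "Qf K \<Delta>' \<Psi>' u (True, k, n) \<le> Qf K \<Delta> \<Psi> u (True, k, n)"
              using mI[OF k] by (simp add: Qf_def par_def)
          next
            fix k n assume k: "k \<in> {1..K}"
            have "qf (GL (\<Psi> k)) (u (False, k, n)) \<le> qf (GL (\<Psi>' k)) (u (False, k, n))"
              using assms(8) k uI[OF mI[OF k]] by (intro qf_GL_mono) auto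
            then show "Qf K \<Delta> \<Psi> u (False, k, n) \<le> Qf K \<Delta>' \<Psi>' u (False, k, n)"
              using mI[OF k] by (simp add: Qf_def par_def)
          qed
        qed
      qed
    qed
    then have "emeasure M {w\<in>space M. covered K P \<beta> \<alpha> X N h' g' w} \<le> emeasure M {w\<in>space M. covered K P \<beta> \<alpha> X N h g w}"
      using E1 E2 by simp
    then show ?thesis unfolding coverage_prob_def measure_def
      by (rule enn2real_mono) (simp add: less_top[symmetric])
  qed
qed

end
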